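(* Let $n \geq 1$ and $m \geq 1$ be integers. The corona graph $P_n \circ P_m$ is a total edge product cordial graph, except when $n = m = 1$ (in which case it is not).
   Context: All graphs are finite and simple. $P_k$ denotes the path on $k$ vertices. For graphs $G$ and $H$ with $V(G)=\{u_1,\dots,u_n\}$, the corona graph $G \circ H$ is obtained by taking one copy of $G$ and $n$ disjoint copies $H^1,\dots,H^n$ of $H$, and joining each vertex $u_i$ by an edge to every vertex of $H^i$. Given an edge labeling $f^*: E(G) \to \{0,1\}$, the induced vertex labeling $f: V(G)\to\{0,1\}$ is $f(v) = \prod\{f^*(uv) : uv \in E(G)\}$ (product of the labels of edges incident to $v$). Let $v_f(i)$ be the number of vertices with $f(v)=i$ and $e_f(i)$ the number of edges with $f^*(e)=i$, for $i=0,1$. The labeling $f^*$ is a total edge product cordial labeling if $|(v_f(0)+e_f(0)) - (v_f(1)+e_f(1))| \leq 1$, and a graph is total edge product cordial if it admits such a labeling. *)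

theory Defs
  imports Main
begin

text \<open>A finite simple graph is represented as a pair (V, E) of a vertex set and a set of
  edges, each edge being a two-element subset of V.\<close>

type_synonym 'a graph = "'a set \<times> 'a set set"

definition simple_graph :: "'a graph \<Rightarrow> bool" where
  "simple_graph G \<longleftrightarrow> finite (fst G) \<and>
     (\<forall>e\<in>snd G. \<exists>u v. u \<noteq> v \<and> e = {u, v} \<and> u \<in> fst G \<and> v \<in> fst G)"

definition path_graph :: "nat \<Rightarrow> nat graph" where
  "path_graph k = ({0..<k}, {{i, Suc i} | i. Suc i < k})"

text \<open>Corona G o H: one copy of G (vertices Inl u) and for every vertex u of G a copy H^u
  of H (vertices Inr (u, h)), with u joined to every vertex of H^u.\<close>
definition corona :: "'a graph \<Rightarrow> 'b graph \<Rightarrow> ('a + ('a \<times> 'b)) graph" where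
  "corona G H =
    (Inl ` fst G \<union> Inr ` (fst G \<times> fst H),
     {{Inl u, Inl v} | u v. {u, v} \<in> snd G}
     \<union> {{Inr (u, a), Inr (u, b)} | u a b. u \<in> fst G \<and> {a, b} \<in> snd H}
     \<union> {{Inl u, Inr (u, h)} | u h. u \<in> fst G \<and> h \<in> fst H})"

definition induced_vlabel :: "'a graph \<Rightarrow> ('a set \<Rightarrow> nat) \<Rightarrow> 'a \<Rightarrow> nat" where
  "induced_vlabel G f v = (\<Prod>e\<in>{e\<in>snd G. v \<in> e}. f e)"

definition v_count :: "'a graph \<Rightarrow> ('a set \<Rightarrow> nat) \<Rightarrow> nat \<Rightarrow> nat" where
  "v_count G f i = card {v\<in>fst G. induced_vlabel G f v = i}"

definition e_count :: "'a graph \<Rightarrow> ('a set \<Rightarrow> nat) \<Rightarrow> nat \<Rightarrow> nat" where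
  "e_count G f i = card {e\<in>snd G. f e = i}"

definition total_edge_product_cordial_labeling :: "'a graph \<Rightarrow> ('a set \<Rightarrow> nat) \<Rightarrow> bool" where
  "total_edge_product_cordial_labeling G f \<longleftrightarrow>
     (\<forall>e\<in>snd G. f e \<in> {0, 1}) \<and>
     \<bar>(int (v_count G f 0) + int (e_count G f 0)) - (int (v_count G f 1) + int (e_count G f 1))\<bar> \<le> 1"

definition total_edge_product_cordial :: "'a graph \<Rightarrow> bool" where
  "total_edge_product_cordial G \<longleftrightarrow> (\<exists>f. total_edge_product_cordial_labeling G f)"

end

theory Submission imports Defs begin

definition sp :: "nat \<times> nat \<Rightarrow> (nat + nat \<times> nat) set" where
  "sp x = {Inl (fst x), Inr x}"
definition ie :: "nat \<times> nat \<Rightarrow> (nat + nat \<times> nat) set" where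
  "ie x = {Inr x, Inr (fst x, Suc (snd x))}"
definition pe :: "nat \<Rightarrow> (nat + nat \<times> nat) set" where
  "pe u = {Inl u, Inl (Suc u)}"

lemma corona_fst: "fst (corona (path_graph n) (path_graph m)) = Inl ` {0..<n} \<union> Inr ` ({0..<n} \<times> {0..<m})"
  by (simp add: corona_def path_graph_def)

lemma corona_snd: "snd (corona (path_graph n) (path_graph m)) =
   pe ` {..<n-1} \<union> ie ` ({0..<n} \<times> {0..<m-1}) \<union> sp ` ({0..<n} \<times> {0..<m})"
proof -
  have 1: "{{Inl u, Inl v} | u v. {u, v} \<in> snd (path_graph n)} = pe ` {..<n-1}"
    unfolding path_graph_def pe_def
    apply (auto simp: doubleton_eq_iff insert_commute)
    subgoal for x by (rule exI[of _ x], rule exI[of _ "Suc x"]) auto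
    done
  have 2: "{{Inr (u, a), Inr (u, b)} | u a b. u \<in> fst (path_graph n) \<and> {a, b} \<in> snd (path_graph m)}
      = ie ` ({0..<n} \<times> {0..<m-1})"
    unfolding path_graph_def ie_def
    apply (auto simp: doubleton_eq_iff insert_commute)
    subgoal for u i by (rule image_eqI[of _ _ "(u,i)"]) auto
    subgoal for a b by (rule exI[of _ a], rule exI[of _ b], rule exI[of _ "Suc b"]) auto
    done
  have 3: "{{Inl u, Inr (u, h)} | u h. u \<in> fst (path_graph n) \<and> h \<in> fst (path_graph m)}
      = sp ` ({0..<n} \<times> {0..<m})"
    unfolding path_graph_def sp_def
    apply auto
    subgoal for u i by (rule image_eqI[of _ _ "(u,i)"]) auto
    subgoal for a b by (rule exI[of _ a], rule exI[of _ b]) auto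
    done
  show ?thesis unfolding corona_def using 1 2 3 by simp
qed

lemma inj_sp: "inj sp" unfolding inj_def sp_def by (auto simp: doubleton_eq_iff)
lemma inj_ie: "inj ie" unfolding inj_def ie_def by (auto simp: doubleton_eq_iff)
lemma inj_pe: "inj pe" unfolding inj_def pe_def by (auto simp: doubleton_eq_iff)

lemma disj: "pe ` A \<inter> ie ` B = {}" "pe ` A \<inter> sp ` C = {}" "ie ` B \<inter> sp ` C = {}"
  unfolding pe_def ie_def sp_def by (auto simp: doubleton_eq_iff)

lemma counts:
  fixes V :: "'a set" and E :: "'a set set"
  assumes fin: "finite E" "finite V" and ZE: "Z \<subseteq> E" and EV: "\<Union>E \<subseteq> V"
  and fdef: "f = (\<lambda>e. if e \<in> Z then 0 else 1::nat)"
  shows "v_count (V,E) f 0 = card (\<Union>Z)" "v_count (V,E) f 1 = card V - card (\<Union>Z)"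
        "e_count (V,E) f 0 = card Z" "e_count (V,E) f 1 = card E - card Z"
proof -
  have lab: "induced_vlabel (V,E) f v = (if v \<in> \<Union>Z then 0 else 1)" for v
  proof (cases "v \<in> \<Union>Z")
    case True
    then obtain e where "e \<in> Z" "v \<in> e" by blast
    then have "e \<in> {e\<in>E. v \<in> e}" "f e = 0" using ZE fdef by auto
    moreover have "finite {e\<in>E. v \<in> e}" using fin by simp
    ultimately show ?thesis using True unfolding induced_vlabel_def
      by (simp add: prod_zero_iff) blast
  next
    case False
    then have "\<forall>e\<in>{e\<in>E. v \<in> e}. f e = 1" using fdef by auto
    then show ?thesis using False unfolding induced_vlabel_def by simp
  qed
  have UV: "\<Union>Z \<subseteq> V" using ZE EV by blast
  have fZ: "finite Z" using fin ZE finite_subset by blast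
  have "{v\<in>V. induced_vlabel (V,E) f v = 0} = \<Union>Z" using lab UV by auto
  then show "v_count (V,E) f 0 = card (\<Union>Z)" unfolding v_count_def by simp
  have "{v\<in>V. induced_vlabel (V,E) f v = 1} = V - \<Union>Z" using lab UV by auto
  then show "v_count (V,E) f 1 = card V - card (\<Union>Z)" unfolding v_count_def
    using UV fin by (simp add: card_Diff_subset finite_subset)
  have "{e\<in>E. f e = 0} = Z" using ZE fdef by auto
  then show "e_count (V,E) f 0 = card Z" unfolding e_count_def by simp
  have "{e\<in>E. f e = 1} = E - Z" using ZE fdef by auto
  then show "e_count (V,E) f 1 = card E - card Z" unfolding e_count_def
    using ZE fZ by (simp add: card_Diff_subset)
qed

lemma card_V: "card (fst (corona (path_graph n) (path_graph m))) = n + n*m"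
  unfolding corona_fst
  by (subst card_Un_disjoint) (auto simp: card_image)

lemma card_E: "card (snd (corona (path_graph n) (path_graph m))) = (n-1) + n*(m-1) + n*m"
proof -
  let ?A = "pe ` {..<n-1}" and ?B = "ie ` ({0..<n} \<times> {0..<m-1})" and ?C = "sp ` ({0..<n} \<times> {0..<m})"
  have c1: "card ?A = n-1" using card_image[OF inj_on_subset[OF inj_pe subset_UNIV]] by simp
  have c2: "card ?B = n*(m-1)" using card_image[OF inj_on_subset[OF inj_ie subset_UNIV]] by simp
  have c3: "card ?C = n*m" using card_image[OF inj_on_subset[OF inj_sp subset_UNIV]] by simp
  have d1: "(?A \<union> ?B) \<inter> ?C = {}" using disj(2)[of "{..<n-1}" "{0..<n} \<times> {0..<m}"] disj(3)[of "{0..<n} \<times> {0..<m-1}" "{0..<n} \<times> {0..<m}"] by blast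
  have d2: "?A \<inter> ?B = {}" by (rule disj(1))
  have "card (?A \<union> ?B \<union> ?C) = card (?A \<union> ?B) + card ?C" by (rule card_Un_disjoint[OF _ _ d1]) auto
  also have "card (?A \<union> ?B) = card ?A + card ?B" by (rule card_Un_disjoint[OF _ _ d2]) auto
  finally show ?thesis unfolding corona_snd using c1 c2 c3 by simp
qed

lemma UE_V: "\<Union>(snd (corona (path_graph n) (path_graph m))) \<subseteq> fst (corona (path_graph n) (path_graph m))"
  unfolding corona_snd corona_fst pe_def ie_def sp_def by auto

lemma construct:
  fixes n m a j q p :: nat
  assumes "a < n" "1 \<le> j" "j \<le> m" "q < j" "p \<le> a"
    and arith0: "\<bar>2 * (3*int a*int m + 2*int j + int q + int p + 1) - (3*int n*int m + int n - 1)\<bar> \<le> 1"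
  shows "total_edge_product_cordial (corona (path_graph n) (path_graph m))"
proof -
  define S where "S = {0..<a}\<times>{0..<m} \<union> {a}\<times>{0..<j}"
  define I where "I = {0..<a}\<times>{0..<m-1} \<union> {a}\<times>{0..<q}"
  define Z where "Z = sp ` S \<union> ie ` I \<union> pe ` {..<p}"
  define f where "f = (\<lambda>e. if e \<in> Z then 0 else 1::nat)"
  let ?G = "corona (path_graph n) (path_graph m)"
  have m1: "m \<ge> 1" using assms by simp
  have "int (3*n*m + n - 1) = 3*int n*int m + int n - 1" using assms by (simp add: of_nat_diff)
  then have arith: "\<bar>2 * int (3*a*m + 2*j + q + p + 1) - int (3*n*m + n - 1)\<bar> \<le> 1"
    using arith0 by simp
  have cS: "card S = a*m + j" unfolding S_def
    by (subst card_Un_disjoint) auto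
  have cI: "card I = a*(m-1) + q" unfolding I_def
    by (subst card_Un_disjoint) auto
  have fS: "finite S" "finite I" unfolding S_def I_def by auto
  have c1: "card (sp ` S) = card S" by (rule card_image[OF inj_on_subset[OF inj_sp subset_UNIV]])
  have c2: "card (ie ` I) = card I" by (rule card_image[OF inj_on_subset[OF inj_ie subset_UNIV]])
  have c3: "card (pe ` {..<p}) = p" using card_image[OF inj_on_subset[OF inj_pe subset_UNIV]] by simp
  have d1: "(sp ` S \<union> ie ` I) \<inter> pe ` {..<p} = {}" using disj(2)[of "{..<p}" S] disj(1)[of "{..<p}" I] by blast
  have d2: "sp ` S \<inter> ie ` I = {}" using disj(3)[of I S] by blast
  have cZ: "card Z = (a*m + j) + (a*(m-1) + q) + p" unfolding Z_def
    using card_Un_disjoint[OF _ _ d1] card_Un_disjoint[OF _ _ d2] fS c1 c2 c3 cS cI by simp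
  have UZ: "\<Union>Z = Inl ` {0..a} \<union> Inr ` S"
  proof
    show "\<Union>Z \<subseteq> Inl ` {0..a} \<union> Inr ` S"
    proof
      fix x assume "x \<in> \<Union>Z"
      then obtain e where e: "e \<in> Z" "x \<in> e" by blast
      show "x \<in> Inl ` {0..a} \<union> Inr ` S"
      proof -
        { assume "e \<in> sp ` S"
          then obtain y where "y \<in> S" "e = sp y" by blast
          then have ?thesis using e unfolding sp_def S_def by auto }
        moreover
        { assume "e \<in> ie ` I"
          then obtain u h where "(u,h) \<in> I" "e = ie (u,h)" by auto
          then have ?thesis using e assms unfolding ie_def S_def I_def by auto }
        moreover
        { assume "e \<in> pe ` {..<p}"
          then obtain u where "u < p" "e = pe u" by blast
          then have ?thesis using e assms unfolding pe_def by auto }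
        ultimately show ?thesis using e unfolding Z_def by blast
      qed
    qed
    show "Inl ` {0..a} \<union> Inr ` S \<subseteq> \<Union>Z"
    proof
      fix x assume x: "x \<in> Inl ` {0..a} \<union> Inr ` S"
      show "x \<in> \<Union>Z"
      proof (cases "x \<in> Inr ` S")
        case True
        then obtain y where "y \<in> S" "x = Inr y" by blast
        then have "x \<in> sp y" "sp y \<in> Z" unfolding Z_def by (simp add: sp_def, intro UnI1 imageI)
        then show ?thesis by blast
      next
        case False
        then obtain u where u: "u \<le> a" "x = Inl u" using x by auto
        then have "(u,0) \<in> S" unfolding S_def using assms m1 by (cases "u = a") auto
        then have "x \<in> sp (u,0)" "sp (u,0) \<in> Z" unfolding Z_def using u
          by (simp add: sp_def, intro UnI1 imageI)
        then show ?thesis by blast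
      qed
    qed
  qed
  have cU: "card (\<Union>Z) = (a+1) + (a*m + j)" unfolding UZ
    using fS cS by (subst card_Un_disjoint) (auto simp: card_image)
  have s1: "S \<subseteq> {0..<n} \<times> {0..<m}" "I \<subseteq> {0..<n} \<times> {0..<m-1}" "{..<p} \<subseteq> {..<n-1}"
    unfolding S_def I_def using assms by auto
  have ZE: "Z \<subseteq> snd ?G" unfolding corona_snd Z_def
    apply (intro Un_least)
    apply (rule subset_trans[OF image_mono[OF s1(1)]], rule Un_upper2)
    apply (rule subset_trans[OF image_mono[OF s1(2)]], rule subset_trans[OF Un_upper2 Un_upper1])
    apply (rule subset_trans[OF image_mono[OF s1(3)]], rule subset_trans[OF Un_upper1 Un_upper1])
    done
  have finE: "finite (snd ?G)" unfolding corona_snd by simp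
  have finV: "finite (fst ?G)" unfolding corona_fst by simp
  have G: "?G = (fst ?G, snd ?G)" by simp
  note c = counts[OF finE finV ZE UE_V f_def]
  have le1: "card (\<Union>Z) \<le> card (fst ?G)"
    by (rule card_mono[OF finV]) (use ZE UE_V in blast)
  have le2: "card Z \<le> card (snd ?G)" by (rule card_mono[OF finE ZE])
  have tot: "int (card (fst ?G)) + int (card (snd ?G)) = int (3*n*m + n - 1)"
  proof -
    obtain n' m' where nm: "n = Suc n'" "m = Suc m'" using assms m1 by (metis Suc_le_D less_imp_Suc_add)
    show ?thesis unfolding card_V card_E nm by (simp add: algebra_simps)
  qed
  have "total_edge_product_cordial_labeling ?G f"
    unfolding total_edge_product_cordial_labeling_def
  proof
    show "\<forall>e\<in>snd ?G. f e \<in> {0, 1}" unfolding f_def by auto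
    have e1: "v_count ?G f 0 = card (\<Union>Z)" "v_count ?G f 1 = card (fst ?G) - card (\<Union>Z)"
        "e_count ?G f 0 = card Z" "e_count ?G f 1 = card (snd ?G) - card Z"
      using c G by metis+
    have "int (card (\<Union>Z)) + int (card Z) = int (3*a*m + 2*j + q + p + 1)"
    proof -
      obtain m' where nm: "m = Suc m'" using m1 by (cases m) auto
      show ?thesis unfolding cU cZ nm by (simp add: algebra_simps)
    qed
    then show "\<bar>int (v_count ?G f 0) + int (e_count ?G f 0) - (int (v_count ?G f 1) + int (e_count ?G f 1))\<bar> \<le> 1"
      unfolding e1 using arith tot le1 le2 by (simp add: of_nat_diff)
  qed
  then show ?thesis unfolding total_edge_product_cordial_def by blast
qed



lemma neg11: "\<not> total_edge_product_cordial (corona (path_graph 1) (path_graph 1))"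
proof
  let ?G = "corona (path_graph 1) (path_graph 1)"
  have V: "fst ?G = {Inl 0, Inr (0,0)}" unfolding corona_fst by auto
  have E: "snd ?G = {{Inl 0, Inr (0,0)}}" unfolding corona_snd by (simp add: sp_def)
  assume "total_edge_product_cordial ?G"
  then obtain f where f: "total_edge_product_cordial_labeling ?G f"
    unfolding total_edge_product_cordial_def by blast
  let ?e = "{Inl 0, Inr (0,0)} :: (nat + nat \<times> nat) set"
  have lab: "induced_vlabel ?G f v = f ?e" if "v \<in> fst ?G" for v
  proof -
    have "{e\<in>snd ?G. v \<in> e} = {?e}" using that V E by auto
    then show ?thesis unfolding induced_vlabel_def by simp
  qed
  have vc: "v_count ?G f i = (if f ?e = i then 2 else 0)" for i
  proof -
    have "{v\<in>fst ?G. induced_vlabel ?G f v = i} = (if f ?e = i then fst ?G else {})"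
      using lab by auto
    then show ?thesis unfolding v_count_def using V by simp
  qed
  have ec: "e_count ?G f i = (if f ?e = i then 1 else 0)" for i
  proof -
    have "{e\<in>snd ?G. f e = i} = (if f ?e = i then {?e} else {})" using E by auto
    then show ?thesis unfolding e_count_def by simp
  qed
  have "f ?e \<in> {0,1}" using f E unfolding total_edge_product_cordial_labeling_def by auto
  then show False using f unfolding total_edge_product_cordial_labeling_def vc ec by auto
qed

theorem theorem3p1:
  fixes n m :: nat
  assumes "n \<ge> 1" and "m \<ge> 1"
  shows "total_edge_product_cordial (corona (path_graph n) (path_graph m))
           \<longleftrightarrow> \<not> (n = 1 \<and> m = 1)"
proof
  assume "total_edge_product_cordial (corona (path_graph n) (path_graph m))"
  then show "\<not> (n = 1 \<and> m = 1)" using neg11 by (metis)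
next
  assume nm: "\<not> (n = 1 \<and> m = 1)"
  have "n = 2*(n div 2) \<or> n = 2*(n div 2)+1" by presburger
  then obtain b where b: "n = 2*b \<or> n = 2*b+1" by blast
  show "total_edge_product_cordial (corona (path_graph n) (path_graph m))"
  proof (cases "n = 2*b")
    case True
    then obtain a where a: "n = 2*a + 2" using assms by (cases b) auto
    have "\<bar>2 * (3*int a*int m + 2*int m + int (m-1) + int a + 1) - (3*int (2*a+2)*int m + int (2*a+2) - 1)\<bar> \<le> 1"
      using assms(2) by (simp add: of_nat_diff algebra_simps)
    then have ar: "\<bar>2 * (3*int a*int m + 2*int m + int (m-1) + int a + 1) - (3*int n*int m + int n - 1)\<bar> \<le> 1"
      unfolding a .
    have "a < n" "1 \<le> m" "m \<le> m" "m - 1 < m" "a \<le> a" using a assms by auto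
    from construct[OF this ar] show ?thesis .
  next
    case False
    then have nb: "n = 2*b+1" using b by simp
    have "m = 2*(m div 2) \<or> m = 2*(m div 2)+1" by presburger
    then obtain t where t: "m = 2*t \<or> m = 2*t+1" by blast
    show ?thesis
    proof (cases "m = 2*t")
      case True
      then have t1: "t \<ge> 1" using assms by simp
      have "\<bar>2 * (3*int b*int (2*t) + 2*int t + int (t-1) + int b + 1) - (3*int (2*b+1)*int (2*t) + int (2*b+1) - 1)\<bar> \<le> 1"
        using t1 by (simp add: of_nat_diff algebra_simps)
      then have ar: "\<bar>2 * (3*int b*int m + 2*int t + int (t-1) + int b + 1) - (3*int n*int m + int n - 1)\<bar> \<le> 1"
        unfolding nb True .
      have "b < n" "1 \<le> t" "t \<le> m" "t - 1 < t" "b \<le> b" using nb True t1 by auto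
      from construct[OF this ar] show ?thesis .
    next
      case False
      then have mt: "m = 2*t+1" using t by simp
      show ?thesis
      proof (cases "t = 0")
        case False
        then have t1: "t \<ge> 1" by simp
        have "\<bar>2 * (3*int b*int (2*t+1) + 2*int (t+1) + int (t-1) + int b + 1) - (3*int (2*b+1)*int (2*t+1) + int (2*b+1) - 1)\<bar> \<le> 1"
          using t1 by (simp add: of_nat_diff algebra_simps)
        then have ar: "\<bar>2 * (3*int b*int m + 2*int (t+1) + int (t-1) + int b + 1) - (3*int n*int m + int n - 1)\<bar> \<le> 1"
          unfolding nb mt .
        have "b < n" "1 \<le> t+1" "t+1 \<le> m" "t - 1 < t+1" "b \<le> b" using nb mt t1 by auto
        from construct[OF this ar] show ?thesis .
      next
        case True
        then have m1: "m = 1" using mt by simp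
        then have b1: "b \<ge> 1" using nm nb by auto
        have "\<bar>2 * (3*int b*int 1 + 2*int 1 + int 0 + int (b-1) + 1) - (3*int (2*b+1)*int 1 + int (2*b+1) - 1)\<bar> \<le> 1"
          using b1 by (simp add: of_nat_diff algebra_simps)
        then have ar: "\<bar>2 * (3*int b*int m + 2*int 1 + int 0 + int (b-1) + 1) - (3*int n*int m + int n - 1)\<bar> \<le> 1"
          unfolding nb m1 .
        have "b < n" "1 \<le> (1::nat)" "1 \<le> m" "(0::nat) < 1" "b - 1 \<le> b" using nb m1 by auto
        from construct[OF this ar] show ?thesis .
      qed
    qed
  qed
qed

end
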